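(* Let $\rho(t)$ solve the Lindblad equation $\frac{d}{dt}\rho=[-iH(t),\rho]+\mathcal{L}_D(\rho)$ and suppose $\rho(t)=\sum_{j=1}^n\lambda_j(t)\pi_j(t)$ where $\Lambda(t)=(\lambda_1(t),\dots,\lambda_n(t))$ is differentiable and $\pi(t)=(\pi_1(t),\dots,\pi_n(t))$ is a differentiable complete flag. Then $$\frac{d}{dt}\Lambda(t)=\Omega^{\pi(t)}\Lambda(t).$$ This holds also at sharp eigenvalue crossings.
   Context: Dissipator: $\mathcal{L}_D(\rho)=\sum_{k=1}^N\big(L_k\rho L_k^\dagger-\tfrac12\{L_k^\dagger L_k,\rho\}\big)$ for fixed $n\times n$ complex matrices $L_1,\dots,L_N$, $H(t)$ Hermitian. A complete flag $\pi=(\pi_1,\dots,\pi_n)$ is an $n$-tuple of rank-one orthogonal projectors on $\mathbb{C}^n$ with $\pi_i\pi_j=\delta_{ij}\pi_i$ and $\sum_j\pi_j=I$. For a complete flag define $w^\pi_{ij}=\sum_{k=1}^N\mathrm{Tr}(\pi_iL_k\pi_jL_k^\dagger)$ and the $n\times n$ matrix $\Omega^\pi$ by $\Omega^\pi_{ij}=w^\pi_{ij}$ for $i\neq j$ and $\Omega^\pi_{jj}=-\sum_{l\neq j}w^\pi_{lj}$. A sharp eigenvalue crossing is an isolated time where some $\lambda_j$ coincide and all crossing eigenvalues have pairwise different derivatives. *)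

theory Defs
  imports "HOL-Analysis.Analysis"
begin

type_synonym 'n cmat = "complex^'n^'n"

definition adj :: "'n::finite cmat \<Rightarrow> 'n cmat" where
  "adj A = (\<chi> i j. cnj (A $ j $ i))"

definition cscale :: "complex \<Rightarrow> 'n::finite cmat \<Rightarrow> 'n cmat" where
  "cscale c A = (\<chi> i j. c * A $ i $ j)"

definition hermitian :: "'n::finite cmat \<Rightarrow> bool" where
  "hermitian A \<longleftrightarrow> adj A = A"

definition dissipator :: "nat \<Rightarrow> (nat \<Rightarrow> 'n::finite cmat) \<Rightarrow> 'n cmat \<Rightarrow> 'n cmat" where
  "dissipator N L \<rho> = (\<Sum>k\<in>{1..N}. L k ** \<rho> ** adj (L k)
       - cscale (1/2) (adj (L k) ** L k ** \<rho> + \<rho> ** (adj (L k) ** L k)))"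

definition rank_one_proj :: "'n::finite cmat \<Rightarrow> bool" where
  "rank_one_proj P \<longleftrightarrow> P ** P = P \<and> adj P = P \<and> rank P = 1"

definition complete_flag :: "('n::finite \<Rightarrow> 'n cmat) \<Rightarrow> bool" where
  "complete_flag \<pi> \<longleftrightarrow> (\<forall>j. rank_one_proj (\<pi> j))
     \<and> (\<forall>i j. \<pi> i ** \<pi> j = (if i = j then \<pi> i else 0))
     \<and> (\<Sum>j\<in>UNIV. \<pi> j) = mat 1"

definition wrate :: "nat \<Rightarrow> (nat \<Rightarrow> 'n::finite cmat) \<Rightarrow> ('n \<Rightarrow> 'n cmat) \<Rightarrow> 'n \<Rightarrow> 'n \<Rightarrow> complex" where
  "wrate N L \<pi> i j = (\<Sum>k\<in>{1..N}. trace (\<pi> i ** L k ** \<pi> j ** adj (L k)))"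

definition Omega :: "nat \<Rightarrow> (nat \<Rightarrow> 'n::finite cmat) \<Rightarrow> ('n \<Rightarrow> 'n cmat) \<Rightarrow> 'n cmat" where
  "Omega N L \<pi> = (\<chi> i j. if i \<noteq> j then wrate N L \<pi> i j
                           else - (\<Sum>l\<in>UNIV - {j}. wrate N L \<pi> l j))"

definition cvec :: "real^'n \<Rightarrow> complex^'n" where
  "cvec x = (\<chi> j. complex_of_real (x $ j))"

end

theory Submission
  imports Defs
begin

lemma madd_rdistrib: "((A::'n::finite cmat) + B) ** C = A ** C + B ** C"
  by (vector matrix_matrix_mult_def sum.distrib[symmetric] field_simps)

lemma msub_ldistrib: "(A::'n::finite cmat) ** (B - C) = A ** B - A ** C"
  by (vector matrix_matrix_mult_def sum_subtractf[symmetric] field_simps)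

lemma msum_left: "(A::'n::finite cmat) ** sum f S = (\<Sum>x\<in>S. A ** f x)"
  by (induction S rule: infinite_finite_induct) (auto simp: matrix_add_ldistrib)

lemma msum_right: "(sum f S :: 'n::finite cmat) ** A = (\<Sum>x\<in>S. f x ** A)"
proof (induction S rule: infinite_finite_induct)
  case (insert x F) then show ?case using madd_rdistrib[of "f x" "sum f F" A] by simp
qed auto

lemma trace_sum: "trace (sum f S :: 'n::finite cmat) = (\<Sum>x\<in>S. trace (f x))"
  by (induction S rule: infinite_finite_induct) (auto simp: trace_add trace_0[simplified])

lemma trace_scaleR: "trace (c *\<^sub>R (A::'n::finite cmat)) = of_real c * trace A"
  unfolding trace_def by (simp add: sum_distrib_left scaleR_conv_of_real[symmetric])

lemma trace_cscale: "trace (cscale c (A::'n::finite cmat)) = c * trace A"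
  by (simp add: trace_def sum_distrib_left cscale_def)

lemma mscaleR_left: "(c *\<^sub>R (A::'n::finite cmat)) ** B = c *\<^sub>R (A ** B)"
  by (simp add: scalar_matrix_assoc)

lemma mscaleR_right: "(A::'n::finite cmat) ** (c *\<^sub>R B) = c *\<^sub>R (A ** B)"
  by (simp add: matrix_scalar_ac scalar_matrix_assoc)

lemma mcscale_right: "(A::'n::finite cmat) ** cscale c B = cscale c (A ** B)"
  by (simp add: matrix_matrix_mult_def cscale_def vec_eq_iff sum_distrib_left mult_ac)

lemma mmult_bb: "bounded_bilinear (\<lambda>(A::'n::finite cmat) B. A ** B)"
proof -
  have "bilinear (\<lambda>(A::'n::finite cmat) B. A ** B)"
    unfolding bilinear_def
    by (auto intro!: linearI simp: matrix_add_ldistrib madd_rdistrib mscaleR_left mscaleR_right)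
  then show ?thesis by (simp add: bilinear_conv_bounded_bilinear)
qed

lemma trace_rank1:
  fixes P :: "'n::finite cmat"
  assumes idem: "P ** P = P" and rk: "rank P = 1"
  shows "trace P = 1"
proof -
  obtain B where B: "B \<subseteq> rows P" "vec.independent B" "rows P \<subseteq> vec.span B" "card B = vec.dim (rows P)"
    using vec.basis_exists by blast
  then have "card B = 1" using rk by (simp add: row_rank_def_gen)
  then obtain r where Br: "B = {r}" by (auto simp: card_1_singleton_iff)
  have r0: "r \<noteq> 0" using B(2) Br vec.dependent_zero by blast
  obtain a0 where ra0: "r = P $ a0" using B(1) Br by (auto simp: rows_def row_def vec_eq_iff)
  have "\<forall>a. \<exists>c. P $ a = c *s r"
  proof
    fix a
    have "P $ a \<in> rows P" by (auto simp: rows_def row_def vec_eq_iff intro!: exI[of _ a])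
    then have "P $ a \<in> vec.span {r}" using B(3) Br by auto
    then show "\<exists>c. P $ a = c *s r" by (auto simp: vec.span_singleton)
  qed
  then obtain c where c: "\<And>a. P $ a = c a *s r" by metis
  have Pab: "\<And>a b. P $ a $ b = c a * r $ b" using c by simp
  obtain d where d: "r $ d \<noteq> 0" using r0 by (auto simp: vec_eq_iff)
  have ca0: "c a0 \<noteq> 0" using c[of a0] ra0 r0 by auto
  define s where "s = (\<Sum>b\<in>UNIV. r $ b * c b)"
  have "(P ** P) $ a0 $ d = c a0 * r $ d * s"
    by (simp add: matrix_matrix_mult_def Pab s_def sum_distrib_left mult_ac)
  then have "c a0 * r $ d * s = c a0 * r $ d * 1" using idem Pab by simp
  then have "s = 1" using ca0 d by simp
  moreover have "trace P = s" by (simp add: trace_def Pab s_def mult.commute)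
  ultimately show ?thesis by simp
qed

lemma key_zero:
  fixes Pi Pj Pdi Q :: "'n::finite cmat"
  assumes ii: "Pi ** Pi = Pi" and ji: "Pj ** Pi = (if j = i then Pi else 0)"
    and eq: "Pi ** Q + Pdi ** Pj = (if i = j then Pdi else 0)"
  shows "trace (Pi ** Q) = 0"
proof -
  have "Pi ** (Pi ** Q + Pdi ** Pj) ** Pi = Pi ** Q ** Pi + Pi ** Pdi ** (Pj ** Pi)"
    by (simp add: matrix_add_ldistrib madd_rdistrib ii matrix_mul_assoc)
  also have "\<dots> = Pi ** Q ** Pi + (if i = j then Pi ** Pdi ** Pi else 0)"
    using ji by auto
  finally have "Pi ** Q ** Pi = 0" using eq by (cases "i = j") auto
  have "trace (Pi ** Q) = trace ((Pi ** Pi) ** Q)" by (simp add: ii)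
  also have "\<dots> = trace (Pi ** (Pi ** Q))" by (simp add: matrix_mul_assoc)
  also have "\<dots> = trace ((Pi ** Q) ** Pi)" by (rule trace_mul_sym)
  finally show ?thesis using \<open>Pi ** Q ** Pi = 0\<close> by (simp add: trace_0[simplified])
qed

theorem mainTheorem2:
  fixes N :: nat and L :: "nat \<Rightarrow> 'n::finite cmat"
    and H :: "real \<Rightarrow> 'n cmat" and \<rho> :: "real \<Rightarrow> 'n cmat"
    and \<Lambda> :: "real \<Rightarrow> real^'n" and \<pi> :: "real \<Rightarrow> 'n \<Rightarrow> 'n cmat"
    and I :: "real set"
  assumes I_open: "open I"
    and herm: "\<And>t. t \<in> I \<Longrightarrow> hermitian (H t)"
    and lindblad: "\<And>t. t \<in> I \<Longrightarrow>
        (\<rho> has_vector_derivative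
           (cscale (-\<i>) (H t ** \<rho> t - \<rho> t ** H t) + dissipator N L (\<rho> t))) (at t)"
    and decomp: "\<And>t. t \<in> I \<Longrightarrow> \<rho> t = (\<Sum>j\<in>UNIV. (\<Lambda> t $ j) *\<^sub>R \<pi> t j)"
    and Lambda_diff: "\<And>t. t \<in> I \<Longrightarrow> \<Lambda> differentiable (at t)"
    and flag: "\<And>t. t \<in> I \<Longrightarrow> complete_flag (\<pi> t)"
    and flag_diff: "\<And>t j. t \<in> I \<Longrightarrow> (\<lambda>s. \<pi> s j) differentiable (at t)"
  shows "\<forall>t\<in>I. cvec (vector_derivative \<Lambda> (at t)) = Omega N L (\<pi> t) *v cvec (\<Lambda> t)"
proof
  fix t assume tI: "t \<in> I"
  define Ld where "Ld = vector_derivative \<Lambda> (at t)"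
  define P where "P = \<pi> t"
  define Pd where "Pd = (\<lambda>j. vector_derivative (\<lambda>s. \<pi> s j) (at t))"
  define l where "l = (\<lambda>j. \<Lambda> t $ j)"
  have hL: "(\<Lambda> has_vector_derivative Ld) (at t)"
    using Lambda_diff[OF tI] by (simp add: Ld_def vector_derivative_works)
  have hl: "((\<lambda>s. \<Lambda> s $ j) has_field_derivative (Ld $ j)) (at t)" for j
    using bounded_linear.has_vector_derivative[OF bounded_linear_vec_nth hL, of j]
    by (simp add: has_real_derivative_iff_has_vector_derivative)
  have hP: "((\<lambda>s. \<pi> s j) has_vector_derivative Pd j) (at t)" for j
    using flag_diff[OF tI] by (simp add: Pd_def vector_derivative_works)
  have fl: "complete_flag P" using flag[OF tI] by (simp add: P_def)
  have orth: "P i ** P j = (if i = j then P i else 0)" for i j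
    using fl by (simp add: complete_flag_def)
  have sumP: "(\<Sum>j\<in>UNIV. P j) = mat 1" using fl by (simp add: complete_flag_def)
  have trP: "trace (P i) = 1" for i
    using fl orth[of i i] trace_rank1[of "P i"] by (simp add: complete_flag_def rank_one_proj_def)
  \<comment> \<open>derivative of rho in two ways\<close>
  define Sd where "Sd = (\<Sum>j\<in>UNIV. l j *\<^sub>R Pd j + Ld $ j *\<^sub>R P j)"
  have hS: "((\<lambda>s. \<Sum>j\<in>UNIV. (\<Lambda> s $ j) *\<^sub>R \<pi> s j) has_vector_derivative Sd) (at t)"
    unfolding Sd_def l_def P_def
    by (intro has_vector_derivative_sum has_vector_derivative_scaleR hl hP)
  have hR: "(\<rho> has_vector_derivative Sd) (at t)"
    by (rule has_vector_derivative_transform_within_open[OF hS I_open tI]) (simp add: decomp)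
  define R where "R = cscale (-\<i>) (H t ** \<rho> t - \<rho> t ** H t) + dissipator N L (\<rho> t)"
  have SdR: "Sd = R" using vector_derivative_unique_at[OF hR lindblad[OF tI]] by (simp add: R_def)
  have trPPd: "trace (P i ** Pd j) = 0" for i j
  proof -
    have h1: "((\<lambda>s. \<pi> s i ** \<pi> s j) has_vector_derivative (P i ** Pd j + Pd i ** P j)) (at t)"
      using bounded_bilinear.has_vector_derivative[OF mmult_bb hP[of i] hP[of j]]
      by (simp add: P_def)
    have h2: "((\<lambda>s. \<pi> s i ** \<pi> s j) has_vector_derivative (if i = j then Pd i else 0)) (at t)"
    proof (rule has_vector_derivative_transform_within_open[OF _ I_open tI])
      show "((\<lambda>s. if i = j then \<pi> s i else 0) has_vector_derivative (if i = j then Pd i else 0)) (at t)"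
        using hP[of i] by auto
      show "(if i = j then \<pi> y i else 0) = \<pi> y i ** \<pi> y j" if "y \<in> I" for y
        using flag[OF that] by (simp add: complete_flag_def)
    qed
    have "P i ** Pd j + Pd i ** P j = (if i = j then Pd i else 0)"
      using vector_derivative_unique_at[OF h1 h2] .
    then show ?thesis using key_zero[of "P i" "P j" j i "Pd j" "Pd i"] orth[of i i] orth[of j i] by metis
  qed
  have rho: "\<rho> t = (\<Sum>j\<in>UNIV. l j *\<^sub>R P j)" using decomp[OF tI] by (simp add: l_def P_def)
  have Prho: "P i ** \<rho> t = l i *\<^sub>R P i" for i
    by (simp add: rho msum_left mscaleR_right orth if_distrib cong: if_cong)
  have rhoP: "\<rho> t ** P i = l i *\<^sub>R P i" for i
    by (simp add: rho msum_right mscaleR_left orth if_distrib cong: if_cong)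
  have tr1: "trace (P i ** X ** \<rho> t) = of_real (l i) * trace (P i ** X)" for i X
  proof -
    have "trace (P i ** X ** \<rho> t) = trace (\<rho> t ** (P i ** X))" by (rule trace_mul_sym)
    also have "\<dots> = trace ((\<rho> t ** P i) ** X)" by (simp add: matrix_mul_assoc)
    finally show ?thesis by (simp add: rhoP mscaleR_left trace_scaleR)
  qed
  have tr2: "trace (P i ** (\<rho> t ** X)) = of_real (l i) * trace (P i ** X)" for i X
    by (simp add: matrix_mul_assoc Prho mscaleR_left trace_scaleR)
  have lhs: "trace (P i ** Sd) = of_real (Ld $ i)" for i
    by (simp add: Sd_def msum_left matrix_add_ldistrib mscaleR_right trace_sum trace_add
        trace_scaleR trPPd orth if_distrib trP cong: if_cong)
  define w where "w = wrate N L P"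
  have trLL: "trace (P i ** (adj (L k) ** L k)) = (\<Sum>m\<in>UNIV. trace (P m ** L k ** P i ** adj (L k)))" for i k
  proof -
    have "trace (P i ** (adj (L k) ** L k)) = trace ((P i ** adj (L k)) ** L k)" by (simp add: matrix_mul_assoc)
    also have "\<dots> = trace (L k ** (P i ** adj (L k)))" by (rule trace_mul_sym)
    also have "\<dots> = trace ((\<Sum>m\<in>UNIV. P m) ** (L k ** (P i ** adj (L k))))" by (simp add: sumP)
    also have "\<dots> = (\<Sum>m\<in>UNIV. trace (P m ** L k ** P i ** adj (L k)))"
      by (simp add: msum_right trace_sum matrix_mul_assoc)
    finally show ?thesis .
  qed
  have trD: "trace (P i ** dissipator N L (\<rho> t)) =
      (\<Sum>j\<in>UNIV. of_real (l j) * w i j) - of_real (l i) * (\<Sum>m\<in>UNIV. w m i)" for i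
  proof -
    have a: "trace (P i ** L k ** \<rho> t ** adj (L k)) = (\<Sum>j\<in>UNIV. of_real (l j) * trace (P i ** L k ** P j ** adj (L k)))" for k
      by (simp add: rho msum_left msum_right mscaleR_left mscaleR_right trace_sum trace_scaleR matrix_mul_assoc)
    have "trace (P i ** dissipator N L (\<rho> t)) = (\<Sum>k\<in>{1..N}. trace (P i ** L k ** \<rho> t ** adj (L k))
        - 1/2 * (trace (P i ** (adj (L k) ** L k ** \<rho> t)) + trace (P i ** (\<rho> t ** (adj (L k) ** L k)))))"
      by (simp add: dissipator_def msum_left trace_sum msub_ldistrib trace_sub mcscale_right trace_cscale
          matrix_add_ldistrib trace_add matrix_mul_assoc)
    also have "\<dots> = (\<Sum>k\<in>{1..N}. (\<Sum>j\<in>UNIV. of_real (l j) * trace (P i ** L k ** P j ** adj (L k)))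
        - of_real (l i) * (\<Sum>m\<in>UNIV. trace (P m ** L k ** P i ** adj (L k))))"
    proof (rule sum.cong[OF refl])
      fix k
      have "trace (P i ** (adj (L k) ** L k ** \<rho> t)) = of_real (l i) * trace (P i ** (adj (L k) ** L k))"
        using tr1[of i "adj (L k) ** L k"] by (simp add: matrix_mul_assoc)
      moreover have "trace (P i ** (\<rho> t ** (adj (L k) ** L k))) = of_real (l i) * trace (P i ** (adj (L k) ** L k))"
        by (rule tr2)
      ultimately show "trace (P i ** L k ** \<rho> t ** adj (L k))
        - 1/2 * (trace (P i ** (adj (L k) ** L k ** \<rho> t)) + trace (P i ** (\<rho> t ** (adj (L k) ** L k)))) =
        (\<Sum>j\<in>UNIV. of_real (l j) * trace (P i ** L k ** P j ** adj (L k)))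
        - of_real (l i) * (\<Sum>m\<in>UNIV. trace (P m ** L k ** P i ** adj (L k)))"
        by (simp add: a trLL)
    qed
    also have "\<dots> = (\<Sum>j\<in>UNIV. of_real (l j) * w i j) - of_real (l i) * (\<Sum>m\<in>UNIV. w m i)"
      by (simp add: w_def wrate_def sum_subtractf sum_distrib_left, simp only: sum.swap[of _ "{Suc 0..N}"])
    finally show ?thesis .
  qed
  have trH: "trace (P i ** cscale (-\<i>) (H t ** \<rho> t - \<rho> t ** H t)) = 0" for i
  proof -
    have "trace (P i ** (H t ** \<rho> t)) = of_real (l i) * trace (P i ** H t)"
      using tr1[of i "H t"] by (simp add: matrix_mul_assoc)
    then show ?thesis by (simp add: mcscale_right trace_cscale msub_ldistrib trace_sub tr2)
  qed
  have rhs: "trace (P i ** R) = (Omega N L P *v cvec (\<Lambda> t)) $ i" for i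
  proof -
    have "trace (P i ** R) = (\<Sum>j\<in>UNIV. of_real (l j) * w i j) - of_real (l i) * (\<Sum>m\<in>UNIV. w m i)"
      by (simp add: R_def matrix_add_ldistrib trace_add trH trD)
    also have "\<dots> = (\<Sum>j\<in>UNIV - {i}. of_real (l j) * w i j) - of_real (l i) * (\<Sum>m\<in>UNIV - {i}. w m i)"
      by (simp add: sum.remove[of UNIV i] algebra_simps)
    also have "\<dots> = (Omega N L P *v cvec (\<Lambda> t)) $ i"
      by (simp add: matrix_vector_mult_def Omega_def cvec_def l_def w_def sum.remove[of UNIV i]
          mult.commute if_distrib cong: if_cong)
    finally show ?thesis .
  qed
  show "cvec Ld = Omega N L (\<pi> t) *v cvec (\<Lambda> t)"
    unfolding vec_eq_iff
  proof
    fix i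
    have "of_real (Ld $ i) = trace (P i ** Sd)" by (rule lhs[symmetric])
    also have "\<dots> = (Omega N L P *v cvec (\<Lambda> t)) $ i" by (simp add: SdR rhs)
    finally show "cvec Ld $ i = (Omega N L (\<pi> t) *v cvec (\<Lambda> t)) $ i"
      by (simp add: cvec_def P_def)
  qed
qed

end
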